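(* Let $\{\varphi_i\}_{i=1}^N$ be a linearly independent set of unit vectors in $\mathbb{R}^N$ such that the family of hyperplanes $\{\varphi_i^{\perp}\}_{i=1}^N$ does norm retrieval in $\mathbb{R}^N$. Then $\{\varphi_i\}_{i=1}^N$ is an orthonormal basis for $\mathbb{R}^N$.
   Context: For a nonzero vector $\varphi\in\mathbb{R}^N$, $\varphi^\perp$ denotes the hyperplane $\{x\in\mathbb{R}^N:\langle x,\varphi\rangle=0\}$. A family of subspaces $\{W_i\}_{i=1}^M$ of $\mathbb{R}^N$ with orthogonal projections $\{P_i\}_{i=1}^M$ does norm retrieval if for all $x,y\in\mathbb{R}^N$, $\|P_ix\|=\|P_iy\|$ for all $i\in\{1,\dots,M\}$ implies $\|x\|=\|y\|$. *)

theory Defs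
  imports "HOL-Analysis.Analysis"
begin

definition orth_proj :: "'a::euclidean_space set \<Rightarrow> 'a \<Rightarrow> 'a" where
  "orth_proj W x = (THE p. p \<in> W \<and> (\<forall>w\<in>W. inner (x - p) w = 0))"

definition perp_hyperplane :: "'a::euclidean_space \<Rightarrow> 'a set" where
  "perp_hyperplane \<phi> = {x. inner x \<phi> = 0}"

definition does_norm_retrieval :: "'i set \<Rightarrow> ('i \<Rightarrow> 'a::euclidean_space set) \<Rightarrow> bool" where
  "does_norm_retrieval I W \<longleftrightarrow>
     (\<forall>x y. (\<forall>i\<in>I. norm (orth_proj (W i) x) = norm (orth_proj (W i) y)) \<longrightarrow> norm x = norm y)"

end

theory Submission
  imports Defs
begin

lemma proj_perp:
  fixes p :: "'a::euclidean_space"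
  assumes "norm p = 1"
  shows "orth_proj (perp_hyperplane p) x = x - inner x p *\<^sub>R p"
  unfolding orth_proj_def
proof (rule the_equality)
  have pp: "inner p p = 1" using assms by (simp add: dot_square_norm)
  show "x - inner x p *\<^sub>R p \<in> perp_hyperplane p \<and>
    (\<forall>w\<in>perp_hyperplane p. inner (x - (x - inner x p *\<^sub>R p)) w = 0)"
    using pp by (auto simp: perp_hyperplane_def inner_diff_left inner_diff_right inner_commute)
  fix q assume q: "q \<in> perp_hyperplane p \<and> (\<forall>w\<in>perp_hyperplane p. inner (x - q) w = 0)"
  let ?r = "x - inner x p *\<^sub>R p"
  have r: "?r \<in> perp_hyperplane p"
    using pp by (auto simp: perp_hyperplane_def inner_diff_left inner_diff_right inner_commute)
  have d: "?r - q \<in> perp_hyperplane p" using r q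
    by (auto simp: perp_hyperplane_def inner_diff_left)
  have "inner (x - q) (?r - q) = 0" using q d by blast
  moreover have "inner (x - ?r) (?r - q) = 0" using d
    by (auto simp: perp_hyperplane_def inner_commute)
  ultimately have "inner (?r - q) (?r - q) = 0"
    by (simp add: inner_diff_left inner_diff_right algebra_simps)
  then show "q = ?r" by simp
qed

lemma norm_proj_sq:
  fixes p :: "'a::euclidean_space"
  assumes "norm p = 1"
  shows "(norm (orth_proj (perp_hyperplane p) x))^2 = (norm x)^2 - (inner x p)^2"
proof -
  have pp: "inner p p = 1" using assms by (simp add: dot_square_norm)
  show ?thesis
    unfolding proj_perp[OF assms] power2_norm_eq_inner
    using pp by (simp add: inner_diff_left inner_diff_right inner_commute power2_eq_square algebra_simps)
qed

theorem mainTheorem1: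
  fixes \<phi> :: "nat \<Rightarrow> 'a::euclidean_space"
  assumes unit: "\<And>i. i < DIM('a) \<Longrightarrow> norm (\<phi> i) = 1"
    and inj: "inj_on \<phi> {..<DIM('a)}"
    and indep: "independent (\<phi> ` {..<DIM('a)})"
    and nr: "does_norm_retrieval {..<DIM('a)} (\<lambda>i. perp_hyperplane (\<phi> i))"
  shows "(\<forall>i<DIM('a). \<forall>j<DIM('a). i \<noteq> j \<longrightarrow> inner (\<phi> i) (\<phi> j) = 0)
         \<and> span (\<phi> ` {..<DIM('a)}) = UNIV"
proof -
  define N where "N = DIM('a)"
  have NR: "norm x = norm y"
    if h: "\<And>i. i < N \<Longrightarrow> (norm x)^2 - (inner x (\<phi> i))^2 = (norm y)^2 - (inner y (\<phi> i))^2"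
    for x y :: 'a
  proof -
    have "\<forall>i\<in>{..<DIM('a)}. norm (orth_proj (perp_hyperplane (\<phi> i)) x) = norm (orth_proj (perp_hyperplane (\<phi> i)) y)"
    proof
      fix i assume "i \<in> {..<DIM('a)}"
      then have i: "i < N" by (simp add: N_def)
      have "(norm (orth_proj (perp_hyperplane (\<phi> i)) x))^2 = (norm (orth_proj (perp_hyperplane (\<phi> i)) y))^2"
        using norm_proj_sq[OF unit] h[OF i] i N_def by simp
      then show "norm (orth_proj (perp_hyperplane (\<phi> i)) x) = norm (orth_proj (perp_hyperplane (\<phi> i)) y)"
        by (meson norm_ge_zero power2_eq_imp_eq)
    qed
    then show ?thesis using nr unfolding does_norm_retrieval_def by blast
  qed
  have card: "card (\<phi> ` {..<N}) = N" using inj card_image N_def by fastforce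
  have spanU: "span (\<phi> ` {..<N}) = UNIV"
  proof -
    have "UNIV \<subseteq> span (\<phi> ` {..<N})"
      by (rule card_ge_dim_independent) (use indep card N_def in auto)
    then show ?thesis by auto
  qed
  have zero: "z = 0" if h: "\<And>m. m < N \<Longrightarrow> inner z (\<phi> m) = 0" for z :: 'a
  proof -
    have "orthogonal z z"
      by (rule orthogonal_to_span[of z "\<phi> ` {..<N}"]) (use spanU h in \<open>auto simp: orthogonal_def\<close>)
    then show ?thesis by (simp add: orthogonal_def)
  qed
  have "\<forall>k<N. \<exists>v. inner v (\<phi> k) = 1 \<and> (\<forall>m<N. m \<noteq> k \<longrightarrow> inner v (\<phi> m) = 0)"
  proof (intro allI impI)
    fix k assume k: "k < N"
    let ?S = "\<phi> ` ({..<N} - {k})"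
    have "dim ?S \<le> card ?S" by (rule dim_le_card) (auto intro: span_base)
    also have "\<dots> \<le> card ({..<N} - {k})" by (rule card_image_le) auto
    also have "\<dots> < N" using k by simp
    finally have "dim ?S < DIM('a)" by (simp add: N_def)
    then obtain x where x0: "x \<noteq> 0" and xo: "\<And>y. y \<in> span ?S \<Longrightarrow> orthogonal x y"
      by (rule orthogonal_to_subspace_exists) blast+
    have xm: "inner x (\<phi> m) = 0" if "m < N" "m \<noteq> k" for m
      using xo[of "\<phi> m"] that by (auto simp: orthogonal_def intro: span_base)
    have xk: "inner x (\<phi> k) \<noteq> 0"
    proof
      assume "inner x (\<phi> k) = 0"
      then have "x = 0" using zero xm by metis
      then show False using x0 by simp
    qed
    show "\<exists>v. inner v (\<phi> k) = 1 \<and> (\<forall>m<N. m \<noteq> k \<longrightarrow> inner v (\<phi> m) = 0)"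
      by (rule exI[of _ "x /\<^sub>R inner x (\<phi> k)"]) (use xk xm in auto)
  qed
  then obtain \<psi> where psi1: "\<And>k. k < N \<Longrightarrow> inner (\<psi> k) (\<phi> k) = 1"
    and psi0: "\<And>k m. k < N \<Longrightarrow> m < N \<Longrightarrow> m \<noteq> k \<Longrightarrow> inner (\<psi> k) (\<phi> m) = 0"
    by metis
  have psid: "inner (\<psi> k) (\<phi> m) = (if k = m then 1 else 0)" if "k < N" "m < N" for k m
    using psi1 psi0 that by auto
  have surj: "\<exists>v. \<forall>m<N. inner v (\<phi> m) = f m" for f :: "nat \<Rightarrow> real"
  proof (intro exI allI impI)
    fix m assume m: "m < N"
    have "inner (\<Sum>k<N. f k *\<^sub>R \<psi> k) (\<phi> m) = (\<Sum>k<N. f k * inner (\<psi> k) (\<phi> m))"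
      by (simp add: inner_sum_left)
    also have "\<dots> = (\<Sum>k<N. if k = m then f k else 0)"
      by (rule sum.cong) (use psid m in auto)
    also have "\<dots> = f m" using m by simp
    finally show "inner (\<Sum>k<N. f k *\<^sub>R \<psi> k) (\<phi> m) = f m" .
  qed

  have gt1: "norm x > 1" if hx: "\<And>m. m < N \<Longrightarrow> \<bar>inner x (\<phi> m)\<bar> = 1" for x :: 'a
  proof -
    have N0: "0 < N" by (simp add: N_def)
    have "\<bar>inner x (\<phi> 0)\<bar> \<le> norm x * norm (\<phi> 0)" by (rule Cauchy_Schwarz_ineq2)
    then have ge: "norm x \<ge> 1" using hx[OF N0] unit[of 0] N0 N_def by simp
    have "norm x \<noteq> 1"
    proof
      assume n1: "norm x = 1"
      have "norm x = norm (0::'a)"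
        by (rule NR) (use hx n1 in \<open>simp add: abs_eq_iff power2_eq_square, metis abs_mult_self_eq mult_1\<close>)
      then show False using n1 by simp
    qed
    then show ?thesis using ge by simp
  qed
  have A: "norm x = norm y"
    if hx: "\<And>m. m < N \<Longrightarrow> \<bar>inner x (\<phi> m)\<bar> = 1" and hy: "\<And>m. m < N \<Longrightarrow> \<bar>inner y (\<phi> m)\<bar> = 1"
    for x y :: 'a
  proof -
    have sx: "(inner x (\<phi> m))^2 = 1" if "m < N" for m
      using hx[OF that] by (metis abs_power2 power2_abs power_one)
    have sy: "(inner y (\<phi> m))^2 = 1" if "m < N" for m
      using hy[OF that] by (metis abs_power2 power2_abs power_one)
    define X where "X = (norm x)^2"
    define Y where "Y = (norm y)^2"
    have X1: "X > 1" using gt1[OF hx] unfolding X_def by (simp add: one_less_power)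
    have Y1: "Y > 1" using gt1[OF hy] unfolding Y_def by (simp add: one_less_power)
    define b where "b = sqrt ((X - 1) / (Y - 1))"
    have b2: "b^2 = (X - 1) / (Y - 1)" unfolding b_def using X1 Y1 by simp
    have "norm x = norm (b *\<^sub>R y)"
    proof (rule NR)
      fix i assume i: "i < N"
      have "(norm (b *\<^sub>R y))^2 - (inner (b *\<^sub>R y) (\<phi> i))^2 = b^2 * (Y - 1)"
        using sy[OF i] by (simp add: Y_def power_mult_distrib algebra_simps)
      also have "\<dots> = X - 1" using b2 Y1 by simp
      finally show "(norm x)^2 - (inner x (\<phi> i))^2 = (norm (b *\<^sub>R y))^2 - (inner (b *\<^sub>R y) (\<phi> i))^2"
        using sx[OF i] X_def by simp
    qed
    then have "X = b^2 * Y" unfolding X_def Y_def by (simp add: power_mult_distrib)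
    then have "X * (Y - 1) = (X - 1) * Y" using b2 Y1 by (simp add: field_simps)
    then have "X = Y" by (simp add: algebra_simps)
    then show ?thesis unfolding X_def Y_def by (simp add: power2_eq_imp_eq)
  qed
  have psiorth: "inner (\<psi> k) (\<psi> l) = 0" if kl: "k < N" "l < N" "k \<noteq> l" for k l
  proof -
    obtain r where r: "\<And>m. m < N \<Longrightarrow> inner r (\<phi> m) = (if m = k \<or> m = l then 0 else 1)"
      using surj[of "\<lambda>m. if m = k \<or> m = l then 0 else 1"] by blast
    define w where "w s t = s *\<^sub>R \<psi> k + t *\<^sub>R \<psi> l + r" for s t :: real
    have wi: "\<bar>inner (w s t) (\<phi> m)\<bar> = 1" if "\<bar>s\<bar> = 1" "\<bar>t\<bar> = 1" "m < N" for s t m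
      using that kl r[of m] psid[of k m] psid[of l m] unfolding w_def
      by (auto simp: inner_add_left)
    have nw: "(norm (w s t))^2 = s^2 * inner (\<psi> k) (\<psi> k) + t^2 * inner (\<psi> l) (\<psi> l) + inner r r
       + 2 * s * t * inner (\<psi> k) (\<psi> l) + 2 * s * inner (\<psi> k) r + 2 * t * inner (\<psi> l) r" for s t
      unfolding w_def power2_norm_eq_inner
      by (simp add: inner_add_left inner_add_right inner_commute power2_eq_square algebra_simps)
    have e1: "norm (w 1 1) = norm (w 1 (-1))" by (rule A) (auto intro: wi)
    have e2: "norm (w (-1) 1) = norm (w 1 (-1))" by (rule A) (auto intro: wi)
    have e3: "norm (w (-1) (-1)) = norm (w 1 (-1))" by (rule A) (auto intro: wi)
    have "(norm (w 1 1))^2 + (norm (w (-1) (-1)))^2 - (norm (w 1 (-1)))^2 - (norm (w (-1) 1))^2 = 0"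
      using e1 e2 e3 by simp
    then show ?thesis unfolding nw by simp
  qed
  have recon: "v = (\<Sum>k<N. inner v (\<phi> k) *\<^sub>R \<psi> k)" for v
  proof -
    have "v - (\<Sum>k<N. inner v (\<phi> k) *\<^sub>R \<psi> k) = 0"
    proof (rule zero)
      fix m assume m: "m < N"
      have "inner (\<Sum>k<N. inner v (\<phi> k) *\<^sub>R \<psi> k) (\<phi> m) = (\<Sum>k<N. inner v (\<phi> k) * inner (\<psi> k) (\<phi> m))"
        by (simp add: inner_sum_left)
      also have "\<dots> = (\<Sum>k<N. if k = m then inner v (\<phi> k) else 0)"
        by (rule sum.cong) (use psid m in auto)
      also have "\<dots> = inner v (\<phi> m)" using m by simp
      finally show "inner (v - (\<Sum>k<N. inner v (\<phi> k) *\<^sub>R \<psi> k)) (\<phi> m) = 0"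
        by (simp add: inner_diff_left)
    qed
    then show ?thesis by simp
  qed
  have phieq: "\<phi> i = (1 / inner (\<psi> i) (\<psi> i)) *\<^sub>R \<psi> i" if i: "i < N" for i
  proof -
    have pne: "\<psi> i \<noteq> 0" using psi1[OF i] by auto
    then have pp: "inner (\<psi> i) (\<psi> i) \<noteq> 0" by simp
    define u where "u = \<phi> i - (1 / inner (\<psi> i) (\<psi> i)) *\<^sub>R \<psi> i"
    have uo: "inner u (\<psi> k) = 0" if k: "k < N" for k
    proof (cases "k = i")
      case True
      then show ?thesis using psi1[OF i] pp unfolding u_def
        by (simp add: inner_diff_left inner_diff_right inner_commute)
    next
      case False
      then show ?thesis using psi0[OF k i] psiorth[OF i k] unfolding u_def
        by (simp add: inner_diff_left inner_diff_right inner_commute)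
    qed
    have "inner u u = inner u (\<Sum>k<N. inner u (\<phi> k) *\<^sub>R \<psi> k)" using recon[of u] by simp
    also have "\<dots> = (\<Sum>k<N. inner u (\<phi> k) * inner u (\<psi> k))" by (simp add: inner_sum_right)
    also have "\<dots> = 0" using uo by simp
    finally have "u = 0" by simp
    then show ?thesis unfolding u_def by simp
  qed
  have "\<forall>i<DIM('a). \<forall>j<DIM('a). i \<noteq> j \<longrightarrow> inner (\<phi> i) (\<phi> j) = 0"
  proof (intro allI impI)
    fix i j assume "i < DIM('a)" "j < DIM('a)" "i \<noteq> j"
    then have ij: "i < N" "j < N" "i \<noteq> j" by (auto simp: N_def)
    show "inner (\<phi> i) (\<phi> j) = 0"
      using phieq[OF ij(1)] phieq[OF ij(2)] psiorth[OF ij] by (metis inner_scaleR_left inner_scaleR_right mult_zero_right)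
  qed
  then show ?thesis using spanU N_def by simp
qed

end
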